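(* The infinite measure on $(\tfrac12,1]\times[-1,\infty)$ with density $\frac{1}{(1+xy)^2}$ (with respect to $dx\,dy$) is $\bar F$-invariant.
   Context: $\bar F:(\tfrac12,1]\times[-1,\infty)\to(\tfrac12,1]\times[-1,\infty)$ (defined Lebesgue-a.e.) is given by $\bar F(x,y)=\left(\frac1x-1,\ \frac{1}{1+y}\right)$ if $x\in(\tfrac12,\tfrac23]$ and $\bar F(x,y)=\left(-\frac1x+2,\ \frac{-1}{2+y}\right)$ if $x\in(\tfrac23,1]$. Invariance means $m(\bar F^{-1}(E))=m(E)$ for all Borel sets $E$, where $m$ is the measure with the given density. *)

theory Defs
  imports "HOL-Analysis.Analysis"
begin

definition Dom :: "(real \<times> real) set" where
  "Dom = {1/2<..1} \<times> {-1..}"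

text \<open>The map F-bar (a representative of the a.e.-defined map; the values on the
  null set where the formulas degenerate, e.g. y = -1 in the first branch, are
  those given by Isabelle's convention x / 0 = 0).\<close>
definition Fbar :: "real \<times> real \<Rightarrow> real \<times> real" where
  "Fbar p = (let x = fst p; y = snd p in
     if x \<le> 2/3 then (1/x - 1, 1/(1+y)) else (-1/x + 2, -1/(2+y)))"

definition mu :: "(real \<times> real) measure" where
  "mu = density (restrict_space lborel Dom) (\<lambda>p. ennreal (1 / (1 + fst p * snd p)^2))"

end

theory Submission
  imports Defs
begin

lemma subst_seq:
  fixes f :: "real \<Rightarrow> ennreal" and g g' :: "real \<Rightarrow> real" and l r :: "nat \<Rightarrow> real"
  assumes [measurable]: "f \<in> borel_measurable borel" "g \<in> borel_measurable borel" "g' \<in> borel_measurable borel"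
  and deriv: "\<And>x. x \<in> X \<Longrightarrow> (g has_real_derivative g' x) (at x)"
  and cont: "continuous_on X g'"
  and nonneg: "\<And>x. x \<in> X \<Longrightarrow> g' x \<ge> 0"
  and mono: "\<And>x y. x \<in> X \<Longrightarrow> y \<in> X \<Longrightarrow> x \<le> y \<Longrightarrow> g x \<le> g y"
  and lr: "\<And>n. l n < r n" "\<And>n. l (Suc n) \<le> l n" "\<And>n. r n \<le> r (Suc n)" "\<And>n. {l n..r n} \<subseteq> X"
  and X: "X = (\<Union>n. {l n..r n})"
  shows "(\<integral>\<^sup>+x. f (g x) * ennreal (g' x) * indicator X x \<partial>lborel) = (\<integral>\<^sup>+u. f u * indicator (g ` X) u \<partial>lborel)"
proof -
  have lrX: "l n \<in> X" "r n \<in> X" for n using lr(1)[of n] lr(4)[of n] by auto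
  have img: "g ` {l n..r n} = {g (l n)..g (r n)}" for n
  proof -
    have c: "continuous_on {l n..r n} g"
      using deriv lr(4) by (meson DERIV_isCont continuous_at_imp_continuous_on subsetD)
    have "g ` {l n..r n} \<subseteq> {g (l n)..g (r n)}" using mono lr(4)[of n] lrX by (auto intro!: mono)
    moreover have "{g (l n)..g (r n)} \<subseteq> g ` {l n..r n}"
    proof
      fix u assume "u \<in> {g (l n)..g (r n)}"
      then show "u \<in> g ` {l n..r n}"
        using IVT'[of g "l n" u "r n"] c lr(1)[of n] by (force simp: continuous_on_eq_continuous_within)
    qed
    ultimately show ?thesis by blast
  qed
  have gX: "g ` X = (\<Union>n. {g (l n)..g (r n)})" unfolding X image_UN img by simp
  have inc1: "incseq (\<lambda>n. {l n..r n})"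
    by (rule incseq_SucI) (use lr in auto)
  have inc2: "incseq (\<lambda>n. {g (l n)..g (r n)})"
    unfolding img[symmetric] by (rule incseq_SucI, rule image_mono) (use inc1 in \<open>auto simp: incseq_Suc_iff\<close>)
  have Xm[measurable]: "X \<in> sets borel" unfolding X by measurable
  have gXm[measurable]: "g ` X \<in> sets borel" unfolding gX by measurable
  have "(\<integral>\<^sup>+u. f u * indicator (g ` X) u \<partial>lborel) = emeasure (density lborel f) (g ` X)"
    by (simp add: emeasure_density)
  also have "\<dots> = (SUP n. emeasure (density lborel f) {g (l n)..g (r n)})"
    unfolding gX by (rule SUP_emeasure_incseq[symmetric]) (use inc2 in auto)
  also have "\<dots> = (SUP n. (\<integral>\<^sup>+u. f u * indicator {g (l n)..g (r n)} u \<partial>lborel))"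
    by (simp add: emeasure_density)
  also have "\<dots> = (SUP n. (\<integral>\<^sup>+x. f (g x) * ennreal (g' x) * indicator {l n..r n} x \<partial>lborel))"
  proof (rule SUP_cong[OF refl])
    fix n
    show "(\<integral>\<^sup>+u. f u * indicator {g (l n)..g (r n)} u \<partial>lborel) = (\<integral>\<^sup>+x. f (g x) * ennreal (g' x) * indicator {l n..r n} x \<partial>lborel)"
      by (rule nn_integral_substitution_aux)
         (use lr(1)[of n] lr(4)[of n] in \<open>auto intro!: deriv nonneg continuous_on_subset[OF cont]\<close>)
  qed
  also have "\<dots> = (SUP n. emeasure (density lborel (\<lambda>x. f (g x) * ennreal (g' x))) {l n..r n})"
    by (simp add: emeasure_density)
  also have "\<dots> = emeasure (density lborel (\<lambda>x. f (g x) * ennreal (g' x))) X"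
    unfolding X by (rule SUP_emeasure_incseq) (use inc1 in auto)
  also have "\<dots> = (\<integral>\<^sup>+x. f (g x) * ennreal (g' x) * indicator X x \<partial>lborel)"
    by (simp add: emeasure_density)
  finally show ?thesis ..
qed


lemma subst_open:
  fixes f :: "real \<Rightarrow> ennreal" and g g' :: "real \<Rightarrow> real"
  assumes [measurable]: "f \<in> borel_measurable borel" "g \<in> borel_measurable borel" "g' \<in> borel_measurable borel"
  and ab: "a < b"
  and deriv: "\<And>x. x \<in> {a<..<b} \<Longrightarrow> (g has_real_derivative g' x) (at x)"
  and cont: "continuous_on {a<..<b} g'"
  and nonneg: "\<And>x. x \<in> {a<..<b} \<Longrightarrow> g' x \<ge> 0"
  and mono: "\<And>x y. x \<in> {a<..<b} \<Longrightarrow> y \<in> {a<..<b} \<Longrightarrow> x \<le> y \<Longrightarrow> g x \<le> g y"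
  shows "(\<integral>\<^sup>+x. f (g x) * ennreal (g' x) * indicator {a<..<b} x \<partial>lborel) = (\<integral>\<^sup>+u. f u * indicator (g ` {a<..<b}) u \<partial>lborel)"
proof (rule subst_seq[OF assms(1-3) deriv cont nonneg mono])
  define l where "l n = a + (b-a)/(real n+3)" for n
  define r where "r n = b - (b-a)/(real n+3)" for n
  have d: "(b-a)/(real (Suc n)+3) \<le> (b-a)/(real n+3)" for n
    using ab by (intro divide_left_mono) auto
  have d2: "(b-a)/(real n+3) < (b-a)/2" for n
    using ab by (intro divide_strict_left_mono) auto
  have d3: "(b-a)/(real n+3) > 0" for n using ab by auto
  show "l n < r n" for n
  proof -
    obtain t where t: "t = (b-a)/(real n+3)" by blast
    have "t < (b-a)/2" using d2[of n] t by simp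
    then show ?thesis unfolding l_def r_def t[symmetric] by argo
  qed
  show "l (Suc n) \<le> l n" for n using d[of n] unfolding l_def by linarith
  show "r n \<le> r (Suc n)" for n using d[of n] unfolding r_def by linarith
  show sub: "{l n..r n} \<subseteq> {a<..<b}" for n using d3[of n] unfolding l_def r_def by auto
  show "{a<..<b} = (\<Union>n. {l n..r n})"
  proof
    show "(\<Union>n. {l n..r n}) \<subseteq> {a<..<b}" using sub by blast
    show "{a<..<b} \<subseteq> (\<Union>n. {l n..r n})"
    proof
      fix x assume x: "x \<in> {a<..<b}"
      define e where "e = min (x-a) (b-x)"
      have e: "e > 0" using x by (auto simp: e_def)
      obtain n :: nat where n: "(b-a)/e < real n" using reals_Archimedean2 by blast
      have "(b-a)/(real n+3) < e"
        using n e ab by (simp add: field_simps)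
      then have "x \<in> {l n..r n}" unfolding l_def r_def e_def by auto
      then show "x \<in> (\<Union>n. {l n..r n})" by blast
    qed
  qed
qed

lemma subst_ray:
  fixes f :: "real \<Rightarrow> ennreal" and g g' :: "real \<Rightarrow> real"
  assumes [measurable]: "f \<in> borel_measurable borel" "g \<in> borel_measurable borel" "g' \<in> borel_measurable borel"
  and deriv: "\<And>x. x \<in> {a<..} \<Longrightarrow> (g has_real_derivative g' x) (at x)"
  and cont: "continuous_on {a<..} g'"
  and nonneg: "\<And>x. x \<in> {a<..} \<Longrightarrow> g' x \<ge> 0"
  and mono: "\<And>x y. x \<in> {a<..} \<Longrightarrow> y \<in> {a<..} \<Longrightarrow> x \<le> y \<Longrightarrow> g x \<le> g y"
  shows "(\<integral>\<^sup>+x. f (g x) * ennreal (g' x) * indicator {a<..} x \<partial>lborel) = (\<integral>\<^sup>+u. f u * indicator (g ` {a<..}) u \<partial>lborel)"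
proof (rule subst_seq[OF assms(1-3) deriv cont nonneg mono])
  define l where "l n = a + 1/(real n+1)" for n
  define r where "r n = a + real n + 2" for n
  have d: "1/(real (Suc n)+1) \<le> 1/(real n+1)" for n
    by (intro divide_left_mono) auto
  have d2: "1/(real n+1) \<le> 1" for n by auto
  have d3: "1/(real n+1) > 0" for n by auto
  show "l n < r n" for n using d2[of n] unfolding l_def r_def by linarith
  show "l (Suc n) \<le> l n" for n using d[of n] unfolding l_def by linarith
  show "r n \<le> r (Suc n)" for n unfolding r_def by simp
  show sub: "{l n..r n} \<subseteq> {a<..}" for n
  proof
    fix x assume "x \<in> {l n..r n}"
    then have "a + 1/(real n+1) \<le> x" unfolding l_def by simp
    then have "a < x" using d3[of n] by linarith
    then show "x \<in> {a<..}" by simp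
  qed
  show "{a<..} = (\<Union>n. {l n..r n})"
  proof
    show "(\<Union>n. {l n..r n}) \<subseteq> {a<..}" using sub by blast
    show "{a<..} \<subseteq> (\<Union>n. {l n..r n})"
    proof
      fix x assume x: "x \<in> {a<..}"
      obtain n :: nat where n: "max (1/(x-a)) (x-a) < real n" using reals_Archimedean2 by blast
      have "1/(real n+1) < x - a"
        using n x by (simp add: field_simps)
      moreover have "x \<le> r n" using n unfolding r_def by simp
      ultimately have "x \<in> {l n..r n}" unfolding l_def by auto
      then show "x \<in> (\<Union>n. {l n..r n})" by blast
    qed
  qed
qed

lemma reflect:
  fixes f :: "real \<Rightarrow> ennreal"
  assumes [measurable]: "f \<in> borel_measurable borel" "A \<in> sets borel"
  shows "(\<integral>\<^sup>+w. f (-w) * indicator A w \<partial>lborel) = (\<integral>\<^sup>+v. f v * indicator (uminus ` A) v \<partial>lborel)"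
proof -
  have [measurable]: "uminus ` A \<in> sets borel"
  proof -
    have "uminus ` A = uminus -` A \<inter> space borel" by force
    also have "\<dots> \<in> sets borel" by (rule measurable_sets[OF _ assms(2)]) measurable
    finally show ?thesis .
  qed
  have "(\<integral>\<^sup>+v. f v * indicator (uminus ` A) v \<partial>lborel) = ennreal \<bar>-1::real\<bar> * (\<integral>\<^sup>+x. f (0 + -1 * x) * indicator (uminus ` A) (0 + -1 * x) \<partial>lborel)"
    by (rule nn_integral_real_affine) auto
  also have "\<dots> = (\<integral>\<^sup>+w. f (-w) * indicator A w \<partial>lborel)"
    by (auto intro!: nn_integral_cong simp: indicator_def image_iff)
  finally show ?thesis ..
qed


lemma inst_c:
  fixes P :: "real \<Rightarrow> ennreal" assumes [measurable]: "P \<in> borel_measurable borel"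
  shows "(\<integral>\<^sup>+x. P (2 - 1/x) * ennreal (1/x^2) * indicator {2/3<..<1} x \<partial>lborel) = (\<integral>\<^sup>+u. P u * indicator {1/2<..<1} u \<partial>lborel)"
proof -
  have img: "(\<lambda>x. 2 - 1/x) ` {2/3<..<1::real} = {1/2<..<1}"
  proof (intro equalityI subsetI)
    fix u assume "u \<in> (\<lambda>x. 2 - 1/x) ` {2/3<..<1::real}"
    then obtain x where x: "2/3 < x" "x < 1" and u: "u = 2 - 1/x" by auto
    have "1 < 1/x" using x by (simp add: field_simps)
    moreover have "1/x < 3/2" using x by (simp add: field_simps)
    ultimately show "u \<in> {1/2<..<1}" using u by auto
  next
    fix u :: real assume u: "u \<in> {1/2<..<1}"
    show "u \<in> (\<lambda>x. 2 - 1/x) ` {2/3<..<1}"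
    proof (rule image_eqI[of _ _ "1/(2-u)"])
      show "u = 2 - 1 / (1 / (2 - u))" using u by simp
      show "1/(2-u) \<in> {2/3<..<1}" using u by (auto simp: field_simps)
    qed
  qed
  have "(\<integral>\<^sup>+x. P (2 - 1/x) * ennreal (1/x^2) * indicator {2/3<..<1} x \<partial>lborel) =
    (\<integral>\<^sup>+u. P u * indicator ((\<lambda>x. 2 - 1/x) ` {2/3<..<1::real}) u \<partial>lborel)"
  proof (rule subst_open[where g = "\<lambda>x. 2 - 1/x" and g' = "\<lambda>x. 1/x^2"])
    show "(\<lambda>x. 2 - 1/x :: real) \<in> borel_measurable borel" by measurable
    show "(\<lambda>x. 1/x^2 :: real) \<in> borel_measurable borel" by measurable
    show "((\<lambda>x. 2 - 1/x) has_real_derivative 1/x^2) (at x)" if "x \<in> {2/3<..<1}" for x :: real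
      using that by (auto intro!: derivative_eq_intros simp: power2_eq_square field_simps)
    show "continuous_on {2/3<..<1::real} (\<lambda>x. 1/x^2)"
      by (intro continuous_intros) auto
    show "2 - 1/x \<le> 2 - 1/y" if "x \<in> {2/3<..<1}" "y \<in> {2/3<..<1}" "x \<le> y" for x y :: real
      using that by (auto intro!: divide_left_mono)
  qed auto
  then show ?thesis unfolding img .
qed

lemma inst_a:
  fixes P :: "real \<Rightarrow> ennreal" assumes [measurable]: "P \<in> borel_measurable borel"
  shows "(\<integral>\<^sup>+x. P (1/x - 1) * ennreal (1/x^2) * indicator {1/2<..<2/3} x \<partial>lborel) = (\<integral>\<^sup>+u. P u * indicator {1/2<..<1} u \<partial>lborel)"
proof -
  have img: "(\<lambda>x. 1 - 1/x) ` {1/2<..<2/3::real} = {-1<..<-1/2}"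
  proof (intro equalityI subsetI)
    fix u assume "u \<in> (\<lambda>x. 1 - 1/x) ` {1/2<..<2/3::real}"
    then obtain x where x: "1/2 < x" "x < 2/3" and u: "u = 1 - 1/x" by auto
    have "3/2 < 1/x" using x by (simp add: field_simps)
    moreover have "1/x < 2" using x by (simp add: field_simps)
    ultimately show "u \<in> {-1<..<-1/2}" using u by auto
  next
    fix u :: real assume u: "u \<in> {-1<..<-1/2}"
    show "u \<in> (\<lambda>x. 1 - 1/x) ` {1/2<..<2/3}"
    proof (rule image_eqI[of _ _ "1/(1-u)"])
      show "u = 1 - 1 / (1 / (1 - u))" using u by simp
      show "1/(1-u) \<in> {1/2<..<2/3}" using u by (auto simp: field_simps)
    qed
  qed
  have "(\<integral>\<^sup>+x. P (1/x - 1) * ennreal (1/x^2) * indicator {1/2<..<2/3} x \<partial>lborel) =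
    (\<integral>\<^sup>+x. (\<lambda>w. P (-w)) (1 - 1/x) * ennreal (1/x^2) * indicator {1/2<..<2/3} x \<partial>lborel)"
    by simp
  also have "\<dots> = (\<integral>\<^sup>+w. P (-w) * indicator ((\<lambda>x. 1 - 1/x) ` {1/2<..<2/3::real}) w \<partial>lborel)"
  proof (rule subst_open[where g = "\<lambda>x. 1 - 1/x" and g' = "\<lambda>x. 1/x^2"])
    show "(\<lambda>x. 1 - 1/x :: real) \<in> borel_measurable borel" by measurable
    show "(\<lambda>x. 1/x^2 :: real) \<in> borel_measurable borel" by measurable
    show "((\<lambda>x. 1 - 1/x) has_real_derivative 1/x^2) (at x)" if "x \<in> {1/2<..<2/3}" for x :: real
      using that by (auto intro!: derivative_eq_intros simp: power2_eq_square field_simps)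
    show "continuous_on {1/2<..<2/3::real} (\<lambda>x. 1/x^2)"
      by (intro continuous_intros) auto
    show "1 - 1/x \<le> 1 - 1/y" if "x \<in> {1/2<..<2/3}" "y \<in> {1/2<..<2/3}" "x \<le> y" for x y :: real
      using that by (auto intro!: divide_left_mono)
  qed auto
  also have "\<dots> = (\<integral>\<^sup>+u. P u * indicator (uminus ` {-1<..<-1/2}) u \<partial>lborel)"
    unfolding img by (rule reflect) auto
  also have "uminus ` {-1<..<-1/2::real} = {1/2<..<1}"
    by (auto simp: image_iff intro!: bexI[of _ "- _"])
  finally show ?thesis .
qed

lemma inst_b:
  fixes Q :: "real \<Rightarrow> ennreal" assumes [measurable]: "Q \<in> borel_measurable borel"
  shows "(\<integral>\<^sup>+y. Q (1/(1+y)) * ennreal (1/(1+y)^2) * indicator {-1<..} y \<partial>lborel) = (\<integral>\<^sup>+v. Q v * indicator {0<..} v \<partial>lborel)"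
proof -
  have img: "(\<lambda>y. -1/(1+y)) ` {(-1::real)<..} = {..<0}"
  proof (intro equalityI subsetI)
    fix u assume "u \<in> (\<lambda>y. -1/(1+y)) ` {(-1::real)<..}"
    then obtain y where y: "-1 < y" and u: "u = -1/(1+y)" by auto
    have "0 < 1+y" using y by simp
    then show "u \<in> {..<0}" using u by (simp add: divide_less_0_iff)
  next
    fix u :: real assume u: "u \<in> {..<0}"
    show "u \<in> (\<lambda>y. -1/(1+y)) ` {-1<..}"
    proof (rule image_eqI[of _ _ "-1/u - 1"])
      show "u = -1 / (1 + (-1/u - 1))" using u by (simp add: field_simps)
      show "-1/u - 1 \<in> {-1<..}" using u by (auto simp: field_simps)
    qed
  qed
  have "(\<integral>\<^sup>+y. Q (1/(1+y)) * ennreal (1/(1+y)^2) * indicator {-1<..} y \<partial>lborel) =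
    (\<integral>\<^sup>+y. (\<lambda>w. Q (-w)) (-1/(1+y)) * ennreal (1/(1+y)^2) * indicator {-1<..} y \<partial>lborel)"
    by simp
  also have "\<dots> = (\<integral>\<^sup>+w. Q (-w) * indicator ((\<lambda>y. -1/(1+y)) ` {(-1::real)<..}) w \<partial>lborel)"
  proof (rule subst_ray[where g = "\<lambda>y. -1/(1+y)" and g' = "\<lambda>y. 1/(1+y)^2"])
    show "(\<lambda>y. -1/(1+y) :: real) \<in> borel_measurable borel" by measurable
    show "(\<lambda>y. 1/(1+y)^2 :: real) \<in> borel_measurable borel" by measurable
    show "((\<lambda>y. -1/(1+y)) has_real_derivative 1/(1+y)^2) (at y)" if "y \<in> {-1<..}" for y :: real
      using that by (auto intro!: derivative_eq_intros simp: power2_eq_square field_simps)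
    show "continuous_on {(-1::real)<..} (\<lambda>y. 1/(1+y)^2)"
      by (intro continuous_intros) auto
    show "-1/(1+x) \<le> -1/(1+y)" if "x \<in> {-1<..}" "y \<in> {-1<..}" "x \<le> y" for x y :: real
      using that by (auto simp: field_simps)
  qed auto
  also have "\<dots> = (\<integral>\<^sup>+u. Q u * indicator (uminus ` {..<0}) u \<partial>lborel)"
    unfolding img by (rule reflect) auto
  also have "uminus ` {..<0::real} = {0<..}"
    by (auto simp: image_iff intro!: bexI[of _ "- _"])
  finally show ?thesis .
qed

lemma inst_d:
  fixes Q :: "real \<Rightarrow> ennreal" assumes [measurable]: "Q \<in> borel_measurable borel"
  shows "(\<integral>\<^sup>+y. Q (-1/(2+y)) * ennreal (1/(2+y)^2) * indicator {-1<..} y \<partial>lborel) = (\<integral>\<^sup>+v. Q v * indicator {-1<..<0} v \<partial>lborel)"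
proof -
  have img: "(\<lambda>y. -1/(2+y)) ` {(-1::real)<..} = {-1<..<0}"
  proof (intro equalityI subsetI)
    fix u assume "u \<in> (\<lambda>y. -1/(2+y)) ` {(-1::real)<..}"
    then obtain y where y: "-1 < y" and u: "u = -1/(2+y)" by auto
    have p: "1 < 2+y" using y by simp
    have "1/(2+y) < 1" "0 < 1/(2+y)" using p by auto
    then show "u \<in> {-1<..<0}" using u by (simp add: minus_divide_left[symmetric])
  next
    fix u :: real assume u: "u \<in> {-1<..<0}"
    show "u \<in> (\<lambda>y. -1/(2+y)) ` {-1<..}"
    proof (rule image_eqI[of _ _ "-1/u - 2"])
      show "u = -1 / (2 + (-1/u - 2))" using u by (simp add: field_simps)
      show "-1/u - 2 \<in> {-1<..}" using u by (auto simp: field_simps)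
    qed
  qed
  have "(\<integral>\<^sup>+y. Q (-1/(2+y)) * ennreal (1/(2+y)^2) * indicator {-1<..} y \<partial>lborel) =
    (\<integral>\<^sup>+w. Q w * indicator ((\<lambda>y. -1/(2+y)) ` {(-1::real)<..}) w \<partial>lborel)"
  proof (rule subst_ray[where g = "\<lambda>y. -1/(2+y)" and g' = "\<lambda>y. 1/(2+y)^2"])
    show "(\<lambda>y. -1/(2+y) :: real) \<in> borel_measurable borel" by measurable
    show "(\<lambda>y. 1/(2+y)^2 :: real) \<in> borel_measurable borel" by measurable
    show "((\<lambda>y. -1/(2+y)) has_real_derivative 1/(2+y)^2) (at y)" if "y \<in> {-1<..}" for y :: real
      using that by (auto intro!: derivative_eq_intros simp: power2_eq_square field_simps)
    show "continuous_on {(-1::real)<..} (\<lambda>y. 1/(2+y)^2)"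
      by (intro continuous_intros) auto
    show "-1/(2+x) \<le> -1/(2+y)" if "x \<in> {-1<..}" "y \<in> {-1<..}" "x \<le> y" for x y :: real
      using that by (auto simp: field_simps)
  qed auto
  then show ?thesis unfolding img .
qed


lemma Fbar_meas[measurable]: "Fbar \<in> borel_measurable borel"
proof -
  have "Fbar \<in> borel_measurable (borel \<Otimes>\<^sub>M borel)"
    unfolding Fbar_def Let_def by measurable
  then show ?thesis by (simp add: borel_prod)
qed

lemma iter:
  fixes F :: "real \<times> real \<Rightarrow> ennreal"
  assumes "F \<in> borel_measurable borel"
  shows "integral\<^sup>N lborel F = (\<integral>\<^sup>+x. \<integral>\<^sup>+y. F (x,y) \<partial>lborel \<partial>lborel)"
proof -
  have m: "F \<in> borel_measurable (lborel \<Otimes>\<^sub>M lborel)"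
    using assms by (simp add: lborel_prod)
  show ?thesis
    by (subst lborel_prod[symmetric]) (rule lborel.nn_integral_fst[OF m, symmetric])
qed

lemma measP:
  fixes K :: "real \<times> real \<Rightarrow> ennreal"
  assumes [measurable]: "K \<in> borel_measurable borel" "A \<in> sets borel"
  shows "(\<lambda>u. \<integral>\<^sup>+v. K (u,v) * indicator A v \<partial>lborel) \<in> borel_measurable borel"
  by measurable


lemma aux_frac: fixes A B C :: real assumes "A \<noteq> 0" "B \<noteq> 0" shows "1/C = 1/A*(A*B/C)*(1/B)"
  using assms by (simp add: field_simps)

lemma id1:
  fixes x y :: real assumes x: "1/2 < x" "x < 2/3" and y: "-1 < y"
  shows "1/(1+x*y)^2 = 1/x^2 * (1/(1+(1/x-1)*(1/(1+y)))^2) * (1/(1+y)^2)"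
proof -
  have xp: "x > 0" using x by simp
  have yp: "1 + y > 0" using y by simp
  have "x*y > -1"
  proof (cases "y \<ge> 0")
    case True then have "x*y \<ge> 0" using xp by simp
    then show ?thesis by linarith
  next
    case False
    then have "x*y > 1 * y" using x by (intro mult_strict_right_mono_neg) auto
    then show ?thesis using y by simp
  qed
  then have q: "1 + x*y > 0" by simp
  have e: "1+(1/x-1)*(1/(1+y)) = (1+x*y)/(x*(1+y))"
  proof -
    have "x*(1+y) > 0" using xp yp by simp
    then have d: "x + x*y \<noteq> 0" by (simp add: algebra_simps)
    show ?thesis using xp yp d by (simp add: field_simps)
  qed
  have "1/((1+x*y)/(x*(1+y)))^2 = x^2*(1+y)^2/(1+x*y)^2" by (simp add: power_divide power_mult_distrib)
  then show ?thesis unfolding e using aux_frac[of "x^2" "(1+y)^2" "(1+x*y)^2"] xp yp by simp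
qed

lemma id2:
  fixes x y :: real assumes x: "2/3 < x" "x < 1" and y: "-1 < y"
  shows "1/(1+x*y)^2 = 1/x^2 * (1/(1+(2 - 1/x)*(-1/(2+y)))^2) * (1/(2+y)^2)"
proof -
  have xp: "x > 0" using x by simp
  have yp: "2 + y > 0" using y by simp
  have "x*y > -1"
  proof (cases "y \<ge> 0")
    case True then have "x*y \<ge> 0" using xp by simp
    then show ?thesis by linarith
  next
    case False
    then have "x*y > 1 * y" using x by (intro mult_strict_right_mono_neg) auto
    then show ?thesis using y by simp
  qed
  then have q: "1 + x*y > 0" by simp
  have e: "1+(2 - 1/x)*(-1/(2+y)) = (1+x*y)/(x*(2+y))"
  proof -
    have "x*(2+y) > 0" using xp yp by simp
    then have d: "x*y + x*2 \<noteq> 0" by (simp add: algebra_simps)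
    show ?thesis using xp yp d by (simp add: field_simps)
  qed
  have "1/((1+x*y)/(x*(2+y)))^2 = x^2*(2+y)^2/(1+x*y)^2" by (simp add: power_divide power_mult_distrib)
  then show ?thesis unfolding e using aux_frac[of "x^2" "(2+y)^2" "(1+x*y)^2"] xp yp by simp
qed


lemma meas_bb: "f \<in> borel_measurable (borel \<Otimes>\<^sub>M borel) \<Longrightarrow> (f::real\<times>real \<Rightarrow> ennreal) \<in> borel_measurable borel"
  by (simp add: borel_prod)

lemma Dom_bb[measurable]: "Dom \<in> sets (borel \<Otimes>\<^sub>M (borel :: real measure))"
  unfolding Dom_def by measurable

lemma Dom_iff: "(x,y) \<in> Dom \<longleftrightarrow> 1/2 < x \<and> x \<le> 1 \<and> -1 \<le> y"
  by (auto simp: Dom_def)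

lemma ennreal_mult3: "0 \<le> a \<Longrightarrow> 0 \<le> b \<Longrightarrow> 0 \<le> c \<Longrightarrow> ennreal (a*b*c) = ennreal a * ennreal b * ennreal c"
  by (simp add: ennreal_mult)

lemma inner1:
  fixes k :: "real \<times> real \<Rightarrow> ennreal"
  assumes km[measurable]: "k \<in> borel_measurable (borel \<Otimes>\<^sub>M borel)"
  and x: "1/2 < x" "x < 2/3"
  shows "(\<integral>\<^sup>+y. k (Fbar (x,y)) * ennreal (1/(1+x*y)^2) * indicator Dom (x,y) \<partial>lborel)
     = ennreal (1/x^2) * (\<integral>\<^sup>+v. k (1/x-1, v) * ennreal (1/(1+(1/x-1) * v)^2) * indicator {0<..} v \<partial>lborel)"
proof -
  define Q where "Q v = k (1/x-1, v) * ennreal (1/(1+(1/x-1) * v)^2)" for v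
  have Qm[measurable]: "Q \<in> borel_measurable borel" unfolding Q_def by measurable
  have "(\<integral>\<^sup>+y. k (Fbar (x,y)) * ennreal (1/(1+x*y)^2) * indicator Dom (x,y) \<partial>lborel)
     = (\<integral>\<^sup>+y. ennreal (1/x^2) * (Q (1/(1+y)) * ennreal (1/(1+y)^2) * indicator {-1<..} y) \<partial>lborel)"
  proof (rule nn_integral_cong_AE)
    show "AE y in lborel. k (Fbar (x,y)) * ennreal (1/(1+x*y)^2) * indicator Dom (x,y) =
        ennreal (1/x^2) * (Q (1/(1+y)) * ennreal (1/(1+y)^2) * indicator {-1<..} y)"
      using AE_lborel_singleton[of "-1::real"]
    proof eventually_elim
      case (elim y)
      show ?case
      proof (cases "y < -1")
        case True then show ?thesis by (simp add: Dom_iff indicator_def)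
      next
        case False
        then have y: "-1 < y" using elim by simp
        have F: "Fbar (x,y) = (1/x-1, 1/(1+y))" using x by (simp add: Fbar_def)
        have "ennreal (1/(1+x*y)^2) = ennreal (1/x^2) * ennreal (1/(1+(1/x-1)*(1/(1+y)))^2) * ennreal (1/(1+y)^2)"
          unfolding id1[OF x y] by (rule ennreal_mult3) auto
        then show ?thesis using x y by (simp add: F Q_def Dom_iff ac_simps)
      qed
    qed
  qed
  also have "\<dots> = ennreal (1/x^2) * (\<integral>\<^sup>+y. Q (1/(1+y)) * ennreal (1/(1+y)^2) * indicator {-1<..} y \<partial>lborel)"
    by (rule nn_integral_cmult) measurable
  also have "\<dots> = ennreal (1/x^2) * (\<integral>\<^sup>+v. Q v * indicator {0<..} v \<partial>lborel)"
    by (simp add: inst_b[OF Qm])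
  finally show ?thesis by (simp add: Q_def)
qed

lemma inner2:
  fixes k :: "real \<times> real \<Rightarrow> ennreal"
  assumes km[measurable]: "k \<in> borel_measurable (borel \<Otimes>\<^sub>M borel)"
  and x: "2/3 < x" "x < 1"
  shows "(\<integral>\<^sup>+y. k (Fbar (x,y)) * ennreal (1/(1+x*y)^2) * indicator Dom (x,y) \<partial>lborel)
     = ennreal (1/x^2) * (\<integral>\<^sup>+v. k (2-1/x, v) * ennreal (1/(1+(2-1/x) * v)^2) * indicator {-1<..<0} v \<partial>lborel)"
proof -
  define Q where "Q v = k (2-1/x, v) * ennreal (1/(1+(2-1/x) * v)^2)" for v
  have Qm[measurable]: "Q \<in> borel_measurable borel" unfolding Q_def by measurable
  have "(\<integral>\<^sup>+y. k (Fbar (x,y)) * ennreal (1/(1+x*y)^2) * indicator Dom (x,y) \<partial>lborel)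
     = (\<integral>\<^sup>+y. ennreal (1/x^2) * (Q (-1/(2+y)) * ennreal (1/(2+y)^2) * indicator {-1<..} y) \<partial>lborel)"
  proof (rule nn_integral_cong_AE)
    show "AE y in lborel. k (Fbar (x,y)) * ennreal (1/(1+x*y)^2) * indicator Dom (x,y) =
        ennreal (1/x^2) * (Q (-1/(2+y)) * ennreal (1/(2+y)^2) * indicator {-1<..} y)"
      using AE_lborel_singleton[of "-1::real"]
    proof eventually_elim
      case (elim y)
      show ?case
      proof (cases "y < -1")
        case True then show ?thesis by (simp add: Dom_iff indicator_def)
      next
        case False
        then have y: "-1 < y" using elim by simp
        have F: "Fbar (x,y) = (2-1/x, -1/(2+y))" using x by (simp add: Fbar_def)
        have "ennreal (1/(1+x*y)^2) = ennreal (1/x^2) * ennreal (1/(1+(2-1/x)*(-1/(2+y)))^2) * ennreal (1/(2+y)^2)"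
          unfolding id2[OF x y] by (rule ennreal_mult3) auto
        then show ?thesis using x y by (simp add: F Q_def Dom_iff ac_simps)
      qed
    qed
  qed
  also have "\<dots> = ennreal (1/x^2) * (\<integral>\<^sup>+y. Q (-1/(2+y)) * ennreal (1/(2+y)^2) * indicator {-1<..} y \<partial>lborel)"
    by (rule nn_integral_cmult) measurable
  also have "\<dots> = ennreal (1/x^2) * (\<integral>\<^sup>+v. Q v * indicator {-1<..<0} v \<partial>lborel)"
    using inst_d[OF Qm] by (simp only:)
  finally show ?thesis by (simp add: Q_def)
qed


lemma Fbar_bb[measurable]: "Fbar \<in> (borel \<Otimes>\<^sub>M borel) \<rightarrow>\<^sub>M (borel \<Otimes>\<^sub>M (borel :: real measure))"
  using Fbar_meas by (simp add: borel_prod)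

lemma main:
  fixes k :: "real \<times> real \<Rightarrow> ennreal"
  assumes km[measurable]: "k \<in> borel_measurable (borel \<Otimes>\<^sub>M borel)"
  shows "(\<integral>\<^sup>+p. k (Fbar p) * ennreal (1/(1+fst p * snd p)^2) * indicator Dom p \<partial>lborel)
       = (\<integral>\<^sup>+p. k p * ennreal (1/(1+fst p * snd p)^2) * indicator Dom p \<partial>lborel)"
proof -
  define K where "K u v = k (u,v) * ennreal (1/(1+u * v)^2)" for u v
  define P1 where "P1 u = (\<integral>\<^sup>+v. K u v * indicator {0<..} v \<partial>lborel)" for u
  define P2 where "P2 u = (\<integral>\<^sup>+v. K u v * indicator {-1<..<0} v \<partial>lborel)" for u
  have Kb: "(\<lambda>p. K (fst p) (snd p)) \<in> borel_measurable borel"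
    unfolding K_def by (rule meas_bb) measurable
  have [measurable]: "P1 \<in> borel_measurable borel"
    using measP[OF Kb, of "{0<..}"] unfolding P1_def by simp
  have [measurable]: "P2 \<in> borel_measurable borel"
    using measP[OF Kb, of "{-1<..<0}"] unfolding P2_def by simp
  have m1: "(\<lambda>p. k (Fbar p) * ennreal (1/(1+fst p * snd p)^2) * indicator Dom p) \<in> borel_measurable borel"
    by (rule meas_bb) measurable
  have m2: "(\<lambda>p. k p * ennreal (1/(1+fst p * snd p)^2) * indicator Dom p) \<in> borel_measurable borel"
    by (rule meas_bb) measurable
  have L1: "(\<integral>\<^sup>+p. k (Fbar p) * ennreal (1/(1+fst p * snd p)^2) * indicator Dom p \<partial>lborel)
     = (\<integral>\<^sup>+x. \<integral>\<^sup>+y. k (Fbar (x,y)) * ennreal (1/(1+x * y)^2) * indicator Dom (x,y) \<partial>lborel \<partial>lborel)"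
    by (subst iter[OF m1]) simp
  also have "\<dots> = (\<integral>\<^sup>+x. ennreal (1/x^2) * P1 (1/x-1) * indicator {1/2<..<2/3} x
                       + ennreal (1/x^2) * P2 (2-1/x) * indicator {2/3<..<1} x \<partial>lborel)"
  proof (rule nn_integral_cong_AE)
    show "AE x in lborel. (\<integral>\<^sup>+y. k (Fbar (x,y)) * ennreal (1/(1+x * y)^2) * indicator Dom (x,y) \<partial>lborel) =
       ennreal (1/x^2) * P1 (1/x-1) * indicator {1/2<..<2/3} x
                       + ennreal (1/x^2) * P2 (2-1/x) * indicator {2/3<..<1} x"
      using AE_lborel_singleton[of "2/3::real"] AE_lborel_singleton[of "1::real"]
    proof eventually_elim
      case (elim x)
      show ?case
      proof (cases "1/2 < x \<and> x < 2/3")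
        case True
        then show ?thesis using inner1[OF km, of x] by (simp add: P1_def K_def)
      next
        case F1: False
        show ?thesis
        proof (cases "2/3 < x \<and> x < 1")
          case True
          then show ?thesis using inner2[OF km, of x] by (simp add: P2_def K_def)
        next
          case False
          with F1 elim have nd: "\<not> (1/2 < x \<and> x \<le> 1)" by auto
          have z: "indicator Dom (x,y) = (0::ennreal)" for y using nd by (auto simp: Dom_iff indicator_def)
          have "indicator {1/2<..<2/3} x = (0::ennreal)" "indicator {2/3<..<1} x = (0::ennreal)"
            using F1 False by (auto simp: indicator_def)
          then show ?thesis using z by simp
        qed
      qed
    qed
  qed
  also have "\<dots> = (\<integral>\<^sup>+x. ennreal (1/x^2) * P1 (1/x-1) * indicator {1/2<..<2/3} x \<partial>lborel)
                + (\<integral>\<^sup>+x. ennreal (1/x^2) * P2 (2-1/x) * indicator {2/3<..<1} x \<partial>lborel)"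
    by (rule nn_integral_add) measurable
  also have "(\<integral>\<^sup>+x. ennreal (1/x^2) * P1 (1/x-1) * indicator {1/2<..<2/3} x \<partial>lborel)
      = (\<integral>\<^sup>+u. P1 u * indicator {1/2<..<1} u \<partial>lborel)"
    using inst_a[of P1] by (simp add: ac_simps)
  also have "(\<integral>\<^sup>+x. ennreal (1/x^2) * P2 (2-1/x) * indicator {2/3<..<1} x \<partial>lborel)
      = (\<integral>\<^sup>+u. P2 u * indicator {1/2<..<1} u \<partial>lborel)"
    using inst_c[of P2] by (simp add: ac_simps)
  also have "(\<integral>\<^sup>+u. P1 u * indicator {1/2<..<1} u \<partial>lborel) + (\<integral>\<^sup>+u. P2 u * indicator {1/2<..<1} u \<partial>lborel)
      = (\<integral>\<^sup>+u. P1 u * indicator {1/2<..<1} u + P2 u * indicator {1/2<..<1} u \<partial>lborel)"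
    by (rule nn_integral_add[symmetric]) measurable
  also have "\<dots> = (\<integral>\<^sup>+u. \<integral>\<^sup>+v. k (u,v) * ennreal (1/(1+u * v)^2) * indicator Dom (u,v) \<partial>lborel \<partial>lborel)"
  proof (rule nn_integral_cong_AE)
    show "AE u in lborel. P1 u * indicator {1/2<..<1} u + P2 u * indicator {1/2<..<1} u =
        (\<integral>\<^sup>+v. k (u,v) * ennreal (1/(1+u * v)^2) * indicator Dom (u,v) \<partial>lborel)"
      using AE_lborel_singleton[of "1::real"]
    proof eventually_elim
      case (elim u)
      show ?case
      proof (cases "1/2 < u \<and> u < 1")
        case True
        have "(\<integral>\<^sup>+v. k (u,v) * ennreal (1/(1+u * v)^2) * indicator Dom (u,v) \<partial>lborel)
          = (\<integral>\<^sup>+v. K u v * indicator {0<..} v + K u v * indicator {-1<..<0} v \<partial>lborel)"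
        proof (rule nn_integral_cong_AE)
          show "AE v in lborel. k (u,v) * ennreal (1/(1+u * v)^2) * indicator Dom (u,v) =
             K u v * indicator {0<..} v + K u v * indicator {-1<..<0} v"
            using AE_lborel_singleton[of "0::real"] AE_lborel_singleton[of "-1::real"]
            by eventually_elim (use True in \<open>auto simp: K_def Dom_iff indicator_def\<close>)
        qed
        also have "\<dots> = P1 u + P2 u"
          unfolding P1_def P2_def
        proof (rule nn_integral_add)
          have "(\<lambda>v. K (fst (u,v)) (snd (u,v))) \<in> borel_measurable borel"
            using Kb by measurable
          then have [measurable]: "K u \<in> borel_measurable borel" by simp
          show "(\<lambda>v. K u v * indicator {0<..} v) \<in> borel_measurable lborel" by measurable
          show "(\<lambda>v. K u v * indicator {-1<..<0} v) \<in> borel_measurable lborel" by measurable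
        qed
        finally show ?thesis using True by simp
      next
        case False
        with elim have nd: "\<not> (1/2 < u \<and> u \<le> 1)" by auto
        have z: "indicator Dom (u,v) = (0::ennreal)" for v using nd by (auto simp: Dom_iff indicator_def)
        have "indicator {1/2<..<1} u = (0::ennreal)" using False by (auto simp: indicator_def)
        then show ?thesis using z by simp
      qed
    qed
  qed
  also have "\<dots> = (\<integral>\<^sup>+p. k p * ennreal (1/(1+fst p * snd p)^2) * indicator Dom p \<partial>lborel)"
    by (subst iter[OF m2]) simp
  finally show ?thesis .
qed


theorem theorem7p2:
  shows "\<forall>E \<in> sets mu. emeasure mu (Fbar -` E \<inter> space mu) = emeasure mu E"
proof
  fix E assume E: "E \<in> sets mu"
  have Db: "Dom \<in> sets borel" using Dom_bb unfolding borel_prod .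
  have Dl: "Dom \<inter> space lborel \<in> sets lborel" using Db by simp
  have sp: "space mu = Dom" unfolding mu_def by (simp add: space_restrict_space)
  have ss: "sets mu = sets (restrict_space lborel Dom)" unfolding mu_def by simp
  have EE: "E \<subseteq> Dom" "E \<in> sets borel" using E unfolding ss sets_restrict_space_iff[OF Dl] by auto
  have Eb[measurable]: "E \<in> sets (borel \<Otimes>\<^sub>M borel)" using EE(2) unfolding borel_prod .
  have pre: "Fbar -` E \<inter> Dom \<in> sets borel"
  proof -
    have "Fbar -` E \<inter> space borel \<in> sets borel" by (rule measurable_sets[OF Fbar_meas EE(2)])
    then show ?thesis using Db by auto
  qed
  have em: "emeasure mu A = (\<integral>\<^sup>+p. ennreal (1 / (1 + fst p * snd p)^2) * indicator A p * indicator Dom p \<partial>lborel)"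
    if "A \<subseteq> Dom" "A \<in> sets borel" for A
  proof -
    have A: "A \<in> sets (restrict_space lborel Dom)" using that sets_restrict_space_iff[OF Dl] by auto
    have mb: "(\<lambda>p. ennreal (1 / (1 + fst p * snd p)^2)) \<in> borel_measurable borel"
      by (rule meas_bb) measurable
    have m: "(\<lambda>p. ennreal (1 / (1 + fst p * snd p)^2)) \<in> borel_measurable (restrict_space lborel Dom)"
      by (intro measurable_restrict_space1) (simp add: mb)
    have "emeasure mu A = (\<integral>\<^sup>+p. ennreal (1 / (1 + fst p * snd p)^2) * indicator A p \<partial>restrict_space lborel Dom)"
      unfolding mu_def by (rule emeasure_density[OF m A])
    also have "\<dots> = (\<integral>\<^sup>+p. ennreal (1 / (1 + fst p * snd p)^2) * indicator A p * indicator Dom p \<partial>lborel)"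
      by (rule nn_integral_restrict_space[OF Dl])
    finally show ?thesis .
  qed
  have "emeasure mu (Fbar -` E \<inter> space mu) = (\<integral>\<^sup>+p. indicator E (Fbar p) * ennreal (1 / (1 + fst p * snd p)^2) * indicator Dom p \<partial>lborel)"
    unfolding sp using pre
    by (subst em) (auto intro!: nn_integral_cong simp: indicator_def)
  also have "\<dots> = (\<integral>\<^sup>+p. indicator E p * ennreal (1 / (1 + fst p * snd p)^2) * indicator Dom p \<partial>lborel)"
    by (rule main) measurable
  also have "\<dots> = emeasure mu E"
    using EE by (subst em) (auto intro!: nn_integral_cong simp: indicator_def)
  finally show "emeasure mu (Fbar -` E \<inter> space mu) = emeasure mu E" .
qed

end
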